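(* Let $X$ be a smooth projective complex variety of dimension $n$, $[\gamma_j]\in H^{n-j,n-j}(X,\mathbb{R})$ ($0\le j\le n$), $\mathcal{E}$ a vector bundle on $X$, $\delta_k\in\{-1,+1\}$, $1\le k\le n-1$, and $\|\cdot\|$ any norm on $H^{n-k,n-k}(X,\mathbb{R})$. The following are equivalent: (1) for all $c\in\overline{\mathrm{Eff}_k(X)}\setminus\{0\}$, $\delta_kP_c(\mathcal{E})>0$; (2) there is a constant $\epsilon>0$ such that for every subvariety $V\subset X$ of dimension $k$, $\delta_kP_V(\mathcal{E})\ge\epsilon\|\mathrm{cl}(V)\|$.
   Context: For $c\in H^{n-k,n-k}(X,\mathbb{R})$, $P_c(\mathcal{E})=\big(\sum_j[\gamma_j]\smile\mathrm{ch}(\mathcal{E})\smile c\big)\frown[X]$, and $P_V(\mathcal{E})=P_{\mathrm{cl}(V)}(\mathcal{E})$ with $\mathrm{cl}(V)$ the cycle class. $\mathrm{Eff}_k(X)\subset H^{n-k,n-k}(X,\mathbb{R})$ is the set of finite sums $\sum a_i\mathrm{cl}(V_i)$ with $a_i\ge0$ and $V_i\subset X$ subvarieties of dimension $k$; $\overline{\mathrm{Eff}_k(X)}$ is its closure. *)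

theory Defs
  imports "HOL-Analysis.Analysis"
begin

text \<open>The real vector space H^{n-k,n-k}(X,R) is modelled by a
finite-dimensional real vector space (type of class euclidean_space); subvarieties
of dimension k are indexed by an arbitrary type, with cycle class map cl.\<close>

definition Eff :: "('v \<Rightarrow> 'h::real_vector) \<Rightarrow> 'h set" where
  "Eff cl = {x. \<exists>I::'v set. \<exists>a::'v \<Rightarrow> real. finite I \<and> (\<forall>V\<in>I. a V \<ge> 0)
                 \<and> x = (\<Sum>V\<in>I. a V *\<^sub>R cl V)}"

definition is_norm :: "('h::real_vector \<Rightarrow> real) \<Rightarrow> bool" where
  "is_norm N \<longleftrightarrow> (\<forall>x y. N (x + y) \<le> N x + N y)
               \<and> (\<forall>c x. N (c *\<^sub>R x) = \<bar>c\<bar> * N x)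
               \<and> (\<forall>x. N x = 0 \<longrightarrow> x = 0)"

end

theory Submission
  imports Defs
begin

lemma isn_basic:
  assumes "is_norm N"
  shows "N 0 = 0" "N (-x) = N x" "N x \<ge> 0" "N (x + y) \<le> N x + N y"
    "N (c *\<^sub>R x) = \<bar>c\<bar> * N x" "N x = 0 \<Longrightarrow> x = 0"
proof -
  have sc: "\<And>c x. N (c *\<^sub>R x) = \<bar>c\<bar> * N x" using assms unfolding is_norm_def by blast
  have tr: "\<And>x y. N (x + y) \<le> N x + N y" using assms unfolding is_norm_def by blast
  show "N 0 = 0" using sc[of 0 0] by simp
  show "N (-x) = N x" using sc[of "-1" x] by simp
  have "N (x + - x) \<le> N x + N (-x)" by (rule tr)
  then show "N x \<ge> 0" using sc[of 0 0] sc[of "-1" x] by simp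
  show "N (x + y) \<le> N x + N y" by (rule tr)
  show "N (c *\<^sub>R x) = \<bar>c\<bar> * N x" by (rule sc)
  show "N x = 0 \<Longrightarrow> x = 0" using assms unfolding is_norm_def by blast
qed

lemma isn_sum:
  assumes "is_norm N" "finite I"
  shows "N (sum f I) \<le> (\<Sum>i\<in>I. N (f i))"
  using assms(2)
proof (induction I rule: finite_induct)
  case empty then show ?case using isn_basic[OF assms(1)] by simp
next
  case (insert i I)
  then show ?case using isn_basic(4)[OF assms(1), of "f i" "sum f I"] by simp
qed

lemma isn_bound:
  fixes N :: "'h::euclidean_space \<Rightarrow> real"
  assumes "is_norm N"
  shows "\<exists>M>0. \<forall>x. N x \<le> M * norm x"
proof (intro exI[of _ "1 + (\<Sum>b\<in>Basis. N b)"] conjI allI)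
  have nn: "\<And>x. N x \<ge> 0" using isn_basic[OF assms] by blast
  show "0 < 1 + (\<Sum>b\<in>Basis. N b)" using sum_nonneg[of Basis N] nn by force
  fix x :: 'h
  have "N x = N (\<Sum>b\<in>Basis. (x \<bullet> b) *\<^sub>R b)" by (simp add: euclidean_representation)
  also have "\<dots> \<le> (\<Sum>b\<in>Basis. N ((x \<bullet> b) *\<^sub>R b))" by (rule isn_sum[OF assms]) simp
  also have "\<dots> = (\<Sum>b\<in>Basis. \<bar>x \<bullet> b\<bar> * N b)" using isn_basic(5)[OF assms] by simp
  also have "\<dots> \<le> (\<Sum>b\<in>Basis. norm x * N b)"
    by (rule sum_mono) (simp add: Basis_le_norm mult_right_mono nn)
  also have "\<dots> \<le> (1 + (\<Sum>b\<in>Basis. N b)) * norm x"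
  proof -
    have "(\<Sum>b\<in>Basis. norm x * N b) = norm x * (\<Sum>b\<in>Basis. N b)" by (rule sum_distrib_left[symmetric])
    then show ?thesis using norm_ge_zero[of x] by (simp add: algebra_simps)
  qed
  finally show "N x \<le> (1 + (\<Sum>b\<in>Basis. N b)) * norm x" .
qed

lemma isn_cont:
  fixes N :: "'h::euclidean_space \<Rightarrow> real"
  assumes "is_norm N"
  shows "continuous_on UNIV N"
proof -
  obtain M where M: "M > 0" "\<And>x. N x \<le> M * norm x" using isn_bound[OF assms] by blast
  have d: "\<bar>N x - N y\<bar> \<le> M * dist x y" for x y
  proof -
    have "N x \<le> N (x - y) + N y" using isn_basic(4)[OF assms, of "x - y" y] by simp
    moreover have "N y \<le> N (y - x) + N x" using isn_basic(4)[OF assms, of "y - x" x] by simp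
    moreover have "N (y - x) = N (x - y)" using isn_basic(2)[OF assms, of "x - y"] by simp
    ultimately have "\<bar>N x - N y\<bar> \<le> N (x - y)" by linarith
    also have "\<dots> \<le> M * dist x y" using M(2)[of "x - y"] by (simp add: dist_norm)
    finally show ?thesis .
  qed
  show ?thesis unfolding continuous_on_iff
  proof (intro ballI allI impI)
    fix x :: 'h and e :: real assume "e > 0"
    show "\<exists>d>0. \<forall>x'\<in>UNIV. dist x' x < d \<longrightarrow> dist (N x') (N x) < e"
    proof (intro exI[of _ "e / M"] conjI ballI impI)
      show "e / M > 0" using \<open>e > 0\<close> M by simp
      fix x' assume "dist x' x < e / M"
      then have "M * dist x' x < e" using M by (simp add: field_simps)
      then show "dist (N x') (N x) < e" using d[of x' x] by (simp add: dist_real_def)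
    qed
  qed
qed

lemma Eff_cl: "cl V \<in> Eff cl"
  unfolding Eff_def by (intro CollectI exI[of _ "{V}"] exI[of _ "\<lambda>_. 1"]) simp

lemma Eff_scale: assumes "x \<in> Eff cl" "t \<ge> 0" shows "t *\<^sub>R x \<in> Eff cl"
proof -
  obtain I a where "finite I" "\<forall>V\<in>I. a V \<ge> 0" "x = (\<Sum>V\<in>I. a V *\<^sub>R cl V)"
    using assms unfolding Eff_def by blast
  then show ?thesis unfolding Eff_def
    by (intro CollectI exI[of _ I] exI[of _ "\<lambda>V. t * a V"])
       (simp add: scaleR_sum_right assms(2))
qed

theorem proposition4p2:
  fixes P :: "'h::euclidean_space \<Rightarrow> real"
    and cl :: "'v \<Rightarrow> 'h"
    and N :: "'h \<Rightarrow> real"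
    and \<delta> :: real
  assumes "linear P"
    and "\<delta> \<in> {-1, 1}"
    and "is_norm N"
  shows "(\<forall>c \<in> closure (Eff cl) - {0}. \<delta> * P c > 0)
     \<longleftrightarrow> (\<exists>\<epsilon>>0. \<forall>V. \<delta> * P (cl V) \<ge> \<epsilon> * N (cl V))"
proof -
  define Q where "Q = (\<lambda>x. \<delta> * P x)"
  have linQ: "linear Q" unfolding Q_def using assms(1) by (simp add: linear_iff algebra_simps)
  then have contQ: "continuous_on UNIV Q"
    by (simp add: linear_continuous_on linear_conv_bounded_linear)
  have contN: "continuous_on UNIV N" by (rule isn_cont[OF assms(3)])
  have Nnn: "\<And>x. N x \<ge> 0" using isn_basic[OF assms(3)] by blast
  have "(\<forall>c \<in> closure (Eff cl) - {0}. Q c > 0) \<longleftrightarrow> (\<exists>\<epsilon>>0. \<forall>V. Q (cl V) \<ge> \<epsilon> * N (cl V))"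
  proof
    assume H: "\<forall>c \<in> closure (Eff cl) - {0}. Q c > 0"
    define S where "S = closure (Eff cl) \<inter> sphere 0 1"
    have "compact S" unfolding S_def by (intro closed_Int_compact) auto
    have "\<exists>e>0. \<forall>x\<in>S. Q x \<ge> e"
    proof (cases "S = {}")
      case True then show ?thesis by (intro exI[of _ 1]) simp
    next
      case False
      obtain y where y: "y \<in> S" "\<And>x. x \<in> S \<Longrightarrow> Q y \<le> Q x"
        using continuous_attains_inf[OF \<open>compact S\<close> False continuous_on_subset[OF contQ]] by blast
      have "Q y > 0" using H y(1) unfolding S_def by auto
      then show ?thesis using y by blast
    qed
    then obtain e where e: "e > 0" "\<And>x. x \<in> S \<Longrightarrow> Q x \<ge> e" by blast
    obtain M where M: "M > 0" "\<And>x. N x \<le> M * norm x" using isn_bound[OF assms(3)] by blast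
    have eM: "e / M > 0" using e M by simp
    have "Q (cl V) \<ge> e / M * N (cl V)" for V
      proof (cases "cl V = 0")
        case True then show ?thesis using linear_0[OF linQ] isn_basic(1)[OF assms(3)] by simp
      next
        case False
        let ?u = "(1 / norm (cl V)) *\<^sub>R cl V"
        have "?u \<in> closure (Eff cl)"
        proof -
          have "(*\<^sub>R) (1 / norm (cl V)) ` Eff cl \<subseteq> Eff cl"
          proof (rule image_subsetI)
            fix x assume "x \<in> Eff cl"
            then show "(1 / norm (cl V)) *\<^sub>R x \<in> Eff cl" by (rule Eff_scale) simp
          qed
          then have "closure ((*\<^sub>R) (1 / norm (cl V)) ` Eff cl) \<subseteq> closure (Eff cl)"
            by (rule closure_mono)
          then have "(*\<^sub>R) (1 / norm (cl V)) ` closure (Eff cl) \<subseteq> closure (Eff cl)"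
            by (simp only: closure_scaleR)
          moreover have "cl V \<in> closure (Eff cl)" using Eff_cl[of cl V] closure_subset[of "Eff cl"] by (rule subsetD[rotated])
          ultimately show ?thesis by (rule subsetD[OF _ imageI])
        qed
        moreover have "norm ?u = 1" using False by simp
        ultimately have "?u \<in> S" unfolding S_def by simp
        then have "Q ?u \<ge> e" by (rule e(2))
        moreover have "Q ?u = Q (cl V) / norm (cl V)" using linear_scale[OF linQ, of "1 / norm (cl V)" "cl V"] by simp
        ultimately have "Q (cl V) / norm (cl V) \<ge> e" by simp
        then have "Q (cl V) \<ge> e * norm (cl V)" using False by (simp add: field_simps)
        moreover have "e / M * N (cl V) \<le> e / M * (M * norm (cl V))"
          using M e by (intro mult_left_mono) auto
        ultimately show ?thesis using M by simp
      qed
    then show "\<exists>\<epsilon>>0. \<forall>V. Q (cl V) \<ge> \<epsilon> * N (cl V)" using eM by blast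
  next
    assume "\<exists>\<epsilon>>0. \<forall>V. Q (cl V) \<ge> \<epsilon> * N (cl V)"
    then obtain e where e: "e > 0" "\<And>V. Q (cl V) \<ge> e * N (cl V)" by blast
    have "Eff cl \<subseteq> {x. e * N x \<le> Q x}"
    proof
      fix x assume "x \<in> Eff cl"
      then obtain I a where I: "finite I" "\<forall>V\<in>I. a V \<ge> 0" "x = (\<Sum>V\<in>I. a V *\<^sub>R cl V)"
        unfolding Eff_def by blast
      have "e * N x \<le> e * (\<Sum>V\<in>I. N (a V *\<^sub>R cl V))"
        using isn_sum[OF assms(3) I(1)] e(1) I(3) by (intro mult_left_mono) auto
      also have "\<dots> = (\<Sum>V\<in>I. a V * (e * N (cl V)))"
      proof -
        have "\<And>V. V \<in> I \<Longrightarrow> e * N (a V *\<^sub>R cl V) = a V * (e * N (cl V))"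
          using I(2) isn_basic(5)[OF assms(3)] by simp
        then show ?thesis unfolding sum_distrib_left by (rule sum.cong[OF refl])
      qed
      also have "\<dots> \<le> (\<Sum>V\<in>I. a V * Q (cl V))"
        using I(2) e(2) by (intro sum_mono mult_left_mono) auto
      also have "\<dots> = Q x"
      proof -
        have "Q x = (\<Sum>V\<in>I. Q (a V *\<^sub>R cl V))" using I(3) linear_sum[OF linQ] by (simp add: o_def)
        also have "\<dots> = (\<Sum>V\<in>I. a V * Q (cl V))" using linear_scale[OF linQ] by simp
        finally show ?thesis by simp
      qed
      finally show "x \<in> {x. e * N x \<le> Q x}" by simp
    qed
    moreover have "closed {x. e * N x \<le> Q x}"
      by (intro closed_Collect_le continuous_intros contN contQ)
    ultimately have cs: "closure (Eff cl) \<subseteq> {x. e * N x \<le> Q x}" by (rule closure_minimal)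
    show "\<forall>c \<in> closure (Eff cl) - {0}. Q c > 0"
    proof
      fix c assume c: "c \<in> closure (Eff cl) - {0}"
      then have "N c > 0" using Nnn[of c] isn_basic(6)[OF assms(3), of c] by force
      moreover have "e * N c \<le> Q c" using cs c by blast
      moreover have "e * N c > 0" using \<open>N c > 0\<close> e(1) by simp
      ultimately show "Q c > 0" by linarith
    qed
  qed
  then show ?thesis by (simp only: Q_def)
qed

end
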